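(* Let $X$ be a path-connected topological space, $Y\subset X$ a discrete subset, $b\in Y$, $G$ a group, and for each $y\in Y$ let $s_y$ be a path from $b$ to $y$, with $s_b$ constant. For $z\in Z^1(X,b)$, the cohomology class in $H^1(X,Y)$ of $\varepsilon_s(z)\bullet z$ depends only on the family $s=(s_y)$ and on the cohomology class of $z$ in $H^1(X,b)$.
   Context: Conventions: a path in $W$ is a continuous map $[0,1]\to W$; $P(W)$ is the set of paths; $p\cdot q$ is concatenation; homotopies of paths are relative to $\{0,1\}$. $G$ has unit $1$. For $Y\subset W$: a $0$-cochain of $(W,Y)$ is $c\colon W\to G$ with $c|_Y=1$; these form a group $C^0(W,Y)$ under pointwise multiplication, and act on maps $u\colon P(W)\to G$ by $(c\bullet u)(p)=c(p(0))u(p)c(p(1))^{-1}$. A $1$-cochain of $(W,Y)$ is $u\colon P(W)\to G$ with $u(p)=1$ for paths with image in $Y$; a cocycle satisfies $u(p)=u(q)$ for homotopic $p,q$ and $u(p\cdot q)=u(p)u(q)$ when defined; $Z^1(W,Y)$ is the set of cocycles and $H^1(W,Y)$ the set of $C^0(W,Y)$-orbits; $(W,b)=(W,\{b\})$. $C^0(Y,b)$ (maps $Y\to G$ equal to $1$ at $b$) is identified with the subgroup of $C^0(X,b)$ of cochains equal to $1$ on $X\setminus Y$. For $z\in Z^1(X,b)$, $\varepsilon_s(z)\in C^0(Y,b)$ is $y\mapsto z(s_y)$. (Since $Y$ is discrete, $\varepsilon_s(z)\bullet z\in Z^1(X,Y)$.) *)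

theory Defs
  imports "HOL-Analysis.Analysis"
begin

text \<open>The group G is a type of class group_add (not necessarily commutative),
written additively: unit 0, product +, inverse uminus.\<close>

definition path_in :: "'a::topological_space set \<Rightarrow> (real \<Rightarrow> 'a) \<Rightarrow> bool" where
  "path_in W p \<longleftrightarrow> path p \<and> path_image p \<subseteq> W"

text \<open>0-cochains of (W,Y): maps c with c = 1 on Y (values off W irrelevant).\<close>
definition cochain0 :: "'a set \<Rightarrow> ('a \<Rightarrow> 'g::group_add) set" where
  "cochain0 Y = {c. \<forall>y\<in>Y. c y = 0}"

definition cact :: "('a \<Rightarrow> 'g::group_add) \<Rightarrow> ((real \<Rightarrow> 'a) \<Rightarrow> 'g) \<Rightarrow> (real \<Rightarrow> 'a) \<Rightarrow> 'g" where
  "cact c u = (\<lambda>p. c (p 0) + u p + - c (p 1))"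

definition cocycle1 :: "'a::topological_space set \<Rightarrow> 'a set \<Rightarrow> ((real \<Rightarrow> 'a) \<Rightarrow> 'g::group_add) \<Rightarrow> bool" where
  "cocycle1 W Y u \<longleftrightarrow>
     (\<forall>p. path_in Y p \<longrightarrow> u p = 0) \<and>
     (\<forall>p q. homotopic_paths W p q \<longrightarrow> u p = u q) \<and>
     (\<forall>p q. path_in W p \<and> path_in W q \<and> pathfinish p = pathstart q \<longrightarrow> u (p +++ q) = u p + u q)"

definition cohomologous :: "'a::topological_space set \<Rightarrow> 'a set \<Rightarrow> ((real \<Rightarrow> 'a) \<Rightarrow> 'g::group_add) \<Rightarrow> ((real \<Rightarrow> 'a) \<Rightarrow> 'g) \<Rightarrow> bool" where
  "cohomologous W Y u v \<longleftrightarrow> (\<exists>c\<in>cochain0 Y. \<forall>p. path_in W p \<longrightarrow> v p = cact c u p)"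

definition eps :: "'a set \<Rightarrow> ('a \<Rightarrow> real \<Rightarrow> 'a) \<Rightarrow> ((real \<Rightarrow> 'a) \<Rightarrow> 'g::group_add) \<Rightarrow> 'a \<Rightarrow> 'g" where
  "eps Y s z = (\<lambda>x. if x \<in> Y then z (s x) else 0)"

definition discrete_subset :: "'a::topological_space set \<Rightarrow> bool" where
  "discrete_subset Y \<longleftrightarrow> (\<forall>y\<in>Y. \<exists>U. open U \<and> U \<inter> Y = {y})"

end

theory Submission
  imports Defs
begin

theorem lemma6p7:
  fixes X Y :: "'a::topological_space set" and b :: 'a
    and s :: "'a \<Rightarrow> real \<Rightarrow> 'a"
    and z z' :: "(real \<Rightarrow> 'a) \<Rightarrow> 'g::group_add"
  assumes "path_connected X" and "Y \<subseteq> X" and "discrete_subset Y" and "b \<in> Y"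
    and "\<And>y. y \<in> Y \<Longrightarrow> path_in X (s y) \<and> pathstart (s y) = b \<and> pathfinish (s y) = y"
    and "\<And>t. t \<in> {0..1} \<Longrightarrow> s b t = b"
    and "cocycle1 X {b} z" and "cocycle1 X {b} z'"
    and "cohomologous X {b} z z'"
  shows "cohomologous X Y (cact (eps Y s z) z) (cact (eps Y s z') z')"
proof -
  obtain c where c0: "c b = 0" and cz: "\<And>p. path_in X p \<Longrightarrow> z' p = c (p 0) + z p + - c (p 1)"
    using assms(9) unfolding cohomologous_def cochain0_def cact_def by auto
  define d where "d = (\<lambda>x. if x \<in> Y then 0 else c x)"
  have key: "d x + eps Y s z x = eps Y s z' x + c x" for x
  proof (cases "x \<in> Y")
    case True
    have "z' (s x) = c b + z (s x) + - c x"
      using cz[of "s x"] assms(5)[OF True] by (simp add: pathstart_def pathfinish_def)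
    then show ?thesis using True c0 by (simp add: d_def eps_def)
  next
    case False
    then show ?thesis by (simp add: d_def eps_def)
  qed
  have "d \<in> cochain0 Y" by (simp add: d_def cochain0_def)
  moreover have "cact (eps Y s z') z' p = cact d (cact (eps Y s z) z) p" if "path_in X p" for p
  proof -
    have "cact (eps Y s z') z' p = eps Y s z' (p 0) + (c (p 0) + z p + - c (p 1)) + - eps Y s z' (p 1)"
      using cz[OF that] by (simp add: cact_def)
    also have "\<dots> = (eps Y s z' (p 0) + c (p 0)) + z p + - (eps Y s z' (p 1) + c (p 1))"
      by (simp only: add.assoc minus_add diff_conv_add_uminus)
    also have "\<dots> = (d (p 0) + eps Y s z (p 0)) + z p + - (d (p 1) + eps Y s z (p 1))"
      by (simp add: key)
    also have "\<dots> = cact d (cact (eps Y s z) z) p"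
      by (simp only: cact_def add.assoc minus_add diff_conv_add_uminus)
    finally show ?thesis .
  qed
  ultimately show ?thesis unfolding cohomologous_def by blast
qed

end
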